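(* Let $R$ be a graded ring and $\mathfrak p\in\operatorname{Spec}^h(R)$ a homogeneous prime ideal. Then the period of the local graded ring $R_{\mathfrak p}$ equals \[ \gcd\bigl(\deg(f)\ \bigm\vert\ f\in R \text{ homogeneous},\ f\notin\mathfrak p,\ \deg(f)\ne0\bigr), \] with the convention $\gcd(\emptyset)=0$.
   Context: A graded ring is a $\mathbb Z$-graded ring $R=\bigoplus_{d\in\mathbb Z}R_d$ (a monoid in graded abelian groups) for which there is $\epsilon\in R_0^\times$ with $rs=\epsilon^{\deg(r)\deg(s)}sr$ for homogeneous $r,s$. $R_{\mathfrak p}$ is the localization at the homogeneous elements not in $\mathfrak p$. The period of a graded ring $S$ is the smallest $d>0$ such that $S_d$ contains a unit, or $0$ if no unit of positive degree exists. *)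

theory Defs
  imports "HOL-Algebra.Ring"
begin

definition unit_inv :: "'a::ring_1 \<Rightarrow> 'a" where
  "unit_inv e = (THE y. e * y = 1 \<and> y * e = 1)"

definition ipow :: "'a::ring_1 \<Rightarrow> int \<Rightarrow> 'a" where
  "ipow e k = (if 0 \<le> k then e ^ nat k else (unit_inv e) ^ nat (- k))"

definition homogeneous :: "(int \<Rightarrow> 'a set) \<Rightarrow> 'a \<Rightarrow> bool" where
  "homogeneous G x \<longleftrightarrow> (\<exists>d. x \<in> G d)"

definition hom_decomp :: "(int \<Rightarrow> 'a::ring_1 set) \<Rightarrow> 'a \<Rightarrow> (int \<Rightarrow> 'a) \<Rightarrow> bool" where
  "hom_decomp G x c \<longleftrightarrow> finite {d. c d \<noteq> 0} \<and> (\<forall>d. c d \<in> G d) \<and> x = sum c {d. c d \<noteq> 0}"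

definition graded_ring :: "(int \<Rightarrow> 'a::ring_1 set) \<Rightarrow> 'a \<Rightarrow> bool" where
  "graded_ring G \<epsilon> \<longleftrightarrow>
     (\<forall>d. 0 \<in> G d \<and> (\<forall>x\<in>G d. \<forall>y\<in>G d. x + y \<in> G d \<and> - x \<in> G d)) \<and>
     1 \<in> G 0 \<and>
     (\<forall>d e. \<forall>x\<in>G d. \<forall>y\<in>G e. x * y \<in> G (d + e)) \<and>
     (\<forall>x. \<exists>!c. hom_decomp G x c) \<and>
     \<epsilon> \<in> G 0 \<and> (\<exists>y. \<epsilon> * y = 1 \<and> y * \<epsilon> = 1) \<and>
     (\<forall>d e. \<forall>r\<in>G d. \<forall>s\<in>G e. r * s = ipow \<epsilon> (d * e) * (s * r))"

definition hom_prime :: "(int \<Rightarrow> 'a::ring_1 set) \<Rightarrow> 'a set \<Rightarrow> bool" where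
  "hom_prime G p \<longleftrightarrow>
     0 \<in> p \<and> (\<forall>x\<in>p. \<forall>y\<in>p. x + y \<in> p \<and> - x \<in> p) \<and>
     (\<forall>x\<in>p. \<forall>r. r * x \<in> p \<and> x * r \<in> p) \<and>
     (\<forall>x\<in>p. \<forall>c. hom_decomp G x c \<longrightarrow> (\<forall>d. c d \<in> p)) \<and>
     1 \<notin> p \<and>
     (\<forall>a b. homogeneous G a \<longrightarrow> homogeneous G b \<longrightarrow> a * b \<in> p \<longrightarrow> a \<in> p \<or> b \<in> p)"

definition hom_compl :: "(int \<Rightarrow> 'a set) \<Rightarrow> 'a set \<Rightarrow> 'a set" where
  "hom_compl G p = {s. homogeneous G s \<and> s \<notin> p}"

text \<open>Ore localization by right fractions a s^-1: (a,s) ~ (b,t) iff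
  there are c, d with s c = t d in S and a c = b d.\<close>
definition frac_rel :: "(int \<Rightarrow> 'a::ring_1 set) \<Rightarrow> 'a set \<Rightarrow> (('a \<times> 'a) \<times> ('a \<times> 'a)) set" where
  "frac_rel G p = {((a, s), (b, t)). s \<in> hom_compl G p \<and> t \<in> hom_compl G p \<and>
      (\<exists>c d. s * c = t * d \<and> s * c \<in> hom_compl G p \<and> a * c = b * d)}"

definition frac :: "(int \<Rightarrow> 'a::ring_1 set) \<Rightarrow> 'a set \<Rightarrow> 'a \<Rightarrow> 'a \<Rightarrow> ('a \<times> 'a) set" where
  "frac G p a s = frac_rel G p `` {(a, s)}"

definition loc :: "(int \<Rightarrow> 'a::ring_1 set) \<Rightarrow> 'a set \<Rightarrow> ('a \<times> 'a) set ring" where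
  "loc G p = \<lparr> carrier = (UNIV \<times> hom_compl G p) // frac_rel G p,
     mult = (\<lambda>X Y. SOME Z. \<exists>a s b t c u. (a, s) \<in> X \<and> (b, t) \<in> Y \<and> u \<in> hom_compl G p \<and>
                 b * u = s * c \<and> Z = frac G p (a * c) (t * u)),
     one = frac G p 1 1,
     zero = frac G p 0 1,
     add = (\<lambda>X Y. SOME Z. \<exists>a s b t c d. (a, s) \<in> X \<and> (b, t) \<in> Y \<and> s * c = t * d \<and>
                 s * c \<in> hom_compl G p \<and> Z = frac G p (a * c + b * d) (s * c)) \<rparr>"

definition loc_grading :: "(int \<Rightarrow> 'a::ring_1 set) \<Rightarrow> 'a set \<Rightarrow> int \<Rightarrow> ('a \<times> 'a) set set" where
  "loc_grading G p k = {X \<in> carrier (loc G p). \<exists>a s d e. (a, s) \<in> X \<and> a \<in> G d \<and> s \<in> G e \<and> k = d - e}"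

definition period :: "('b, 'm) monoid_scheme \<Rightarrow> (int \<Rightarrow> 'b set) \<Rightarrow> int" where
  "period S GS = (if \<exists>d>0. GS d \<inter> Units S \<noteq> {}
                  then (LEAST d. d > 0 \<and> GS d \<inter> Units S \<noteq> {}) else 0)"

end

theory Submission
  imports Defs
begin

locale grl =
  fixes G :: "int \<Rightarrow> 'a::ring_1 set" and eps :: 'a and p :: "'a set"
  assumes gr: "graded_ring G eps" and hp: "hom_prime G p"
begin

abbreviation "S \<equiv> hom_compl G p"

lemma G_zero: "0 \<in> G d" using gr unfolding graded_ring_def by blast
lemma G_add: "x \<in> G d \<Longrightarrow> y \<in> G d \<Longrightarrow> x + y \<in> G d" using gr unfolding graded_ring_def by blast
lemma G_one: "1 \<in> G 0" using gr unfolding graded_ring_def by blast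
lemma G_mult: "x \<in> G d \<Longrightarrow> y \<in> G e \<Longrightarrow> x * y \<in> G (d + e)" using gr unfolding graded_ring_def by blast
lemma dec_ex1: "\<exists>!c. hom_decomp G x c" using gr unfolding graded_ring_def by blast
lemma eps_unit: "\<exists>y. eps * y = 1 \<and> y * eps = 1" using gr unfolding graded_ring_def by blast
lemma comm: "r \<in> G d \<Longrightarrow> s \<in> G e \<Longrightarrow> r * s = ipow eps (d * e) * (s * r)"
  using gr unfolding graded_ring_def by blast

lemma p_zero: "0 \<in> p" using hp by (simp add: hom_prime_def)
lemma p_add: "x \<in> p \<Longrightarrow> y \<in> p \<Longrightarrow> x + y \<in> p" using hp by (simp add: hom_prime_def)
lemma p_neg: "x \<in> p \<Longrightarrow> - x \<in> p" using hp by (simp add: hom_prime_def)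
lemma p_diff: "x \<in> p \<Longrightarrow> y \<in> p \<Longrightarrow> x - y \<in> p"
  using p_add[of x "- y"] p_neg[of y] by simp
lemma p_multL: "x \<in> p \<Longrightarrow> r * x \<in> p" using hp by (simp add: hom_prime_def)
lemma p_multR: "x \<in> p \<Longrightarrow> x * r \<in> p" using hp by (simp add: hom_prime_def)
lemma p_comp: "x \<in> p \<Longrightarrow> hom_decomp G x c \<Longrightarrow> c d \<in> p" using hp by (simp add: hom_prime_def)
lemma one_notin: "1 \<notin> p" using hp by (simp add: hom_prime_def)
lemma prime: "a \<in> G d \<Longrightarrow> b \<in> G e \<Longrightarrow> a * b \<in> p \<Longrightarrow> a \<in> p \<or> b \<in> p"
  using hp unfolding hom_prime_def homogeneous_def by blast

lemma p_sum: "finite K \<Longrightarrow> (\<And>k. k \<in> K \<Longrightarrow> f k \<in> p) \<Longrightarrow> sum f K \<in> p"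
  by (induction K rule: finite_induct) (auto intro: p_zero p_add)

lemma S_iff: "s \<in> S \<longleftrightarrow> (\<exists>d. s \<in> G d) \<and> s \<notin> p"
  by (simp add: hom_compl_def homogeneous_def)

lemma S_mult: "A \<in> S \<Longrightarrow> B \<in> S \<Longrightarrow> A * B \<in> S"
  unfolding S_iff using G_mult prime by blast

lemma S_one: "1 \<in> S" unfolding S_iff using G_one one_notin by blast

definition dec where "dec x = (THE c. hom_decomp G x c)"

lemma dec: "hom_decomp G x (dec x)"
  unfolding dec_def using dec_ex1 by (rule theI')

lemma dec_unique: "hom_decomp G x c \<Longrightarrow> hom_decomp G x c' \<Longrightarrow> c = c'"
  using dec_ex1 by blast

lemma dec_sum: "hom_decomp G x c \<Longrightarrow> finite K \<Longrightarrow> {d. c d \<noteq> 0} \<subseteq> K \<Longrightarrow> x = sum c K"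
  unfolding hom_decomp_def by (auto intro: sum.mono_neutral_left)

lemma hd_fin: "hom_decomp G x c \<Longrightarrow> finite {d. c d \<noteq> 0}" by (simp add: hom_decomp_def)
lemma hd_mem: "hom_decomp G x c \<Longrightarrow> c d \<in> G d" by (simp add: hom_decomp_def)

lemma hd_zero: "hom_decomp G 0 (\<lambda>_. 0)"
  by (simp add: hom_decomp_def G_zero)

lemma hd_single: "x \<in> G m \<Longrightarrow> hom_decomp G x (\<lambda>j. if j = m then x else 0)"
  unfolding hom_decomp_def
proof (intro conjI allI)
  assume "x \<in> G m"
  have "{d. (if d = m then x else 0) \<noteq> 0} \<subseteq> {m}" by auto
  then show "finite {d. (if d = m then x else 0) \<noteq> 0}" using finite_subset by blast
  fix d show "(if d = m then x else 0) \<in> G d" using \<open>x \<in> G m\<close> G_zero by auto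
next
  assume "x \<in> G m"
  show "x = (\<Sum>d | (if d = m then x else 0) \<noteq> 0. if d = m then x else 0)"
  proof (cases "x = 0")
    case True then show ?thesis by simp
  next
    case False then have "{d. (if d = m then x else 0) \<noteq> 0} = {m}" by auto
    then show ?thesis by simp
  qed
qed

lemma add_sum: assumes "\<And>x y. f (x + y) = f x + f y" "f 0 = 0" "finite K"
  shows "f (sum c K) = (\<Sum>k\<in>K. f (c k))"
  using assms(3) by (induction K rule: finite_induct) (simp_all add: assms(1,2))

lemma shift:
  assumes hd: "hom_decomp G y c" and add: "\<And>x y. f (x + y) = f x + f y" and f0: "f 0 = 0"
    and deg: "\<And>k. f (c k) \<in> G (k + e)"
  shows "hom_decomp G (f y) (\<lambda>j. f (c (j - e)))"
proof -
  define K where "K = {d. c d \<noteq> 0}"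
  have fK: "finite K" using hd_fin[OF hd] K_def by simp
  have sub: "{j. f (c (j - e)) \<noteq> 0} \<subseteq> (\<lambda>k. k + e) ` K"
  proof
    fix j assume "j \<in> {j. f (c (j - e)) \<noteq> 0}"
    then have "c (j - e) \<noteq> 0" using f0 by auto
    then have "j - e \<in> K" by (simp add: K_def)
    then show "j \<in> (\<lambda>k. k + e) ` K" by (rule rev_image_eqI) simp
  qed
  have fin: "finite {j. f (c (j - e)) \<noteq> 0}" using finite_subset[OF sub] fK by blast
  have "f y = f (sum c K)" using hd unfolding hom_decomp_def K_def by simp
  also have "\<dots> = (\<Sum>k\<in>K. f (c k))" by (rule add_sum[OF add f0 fK])
  also have "\<dots> = (\<Sum>j\<in>(\<lambda>k. k + e) ` K. f (c (j - e)))"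
    by (subst sum.reindex) (auto simp: inj_on_def)
  also have "\<dots> = (\<Sum>j\<in>{j. f (c (j - e)) \<noteq> 0}. f (c (j - e)))"
    by (rule sum.mono_neutral_right) (use fK sub in auto)
  finally show ?thesis unfolding hom_decomp_def using fin deg by (metis diff_add_cancel)
qed

lemma shiftL: "hom_decomp G y c \<Longrightarrow> s \<in> G e \<Longrightarrow> hom_decomp G (s * y) (\<lambda>j. s * c (j - e))"
  apply (rule shift[where f="\<lambda>x. s * x"])
     apply (auto simp: distrib_left)
  by (metis G_mult add.commute hd_mem)

lemma shiftR: "hom_decomp G y c \<Longrightarrow> s \<in> G e \<Longrightarrow> hom_decomp G (y * s) (\<lambda>j. c (j - e) * s)"
  by (rule shift[where f="\<lambda>x. x * s"]) (auto simp: distrib_right dest: hd_mem intro: G_mult)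

lemma ipow0: "ipow eps 0 = 1" by (simp add: ipow_def)

lemma eps_comm_hom: "r \<in> G d \<Longrightarrow> eps * r = r * eps"
proof -
  assume r: "r \<in> G d"
  have "eps \<in> G 0" using gr unfolding graded_ring_def by blast
  from comm[OF r this] show ?thesis by (simp add: ipow0)
qed

lemma hom_central:
  assumes h: "\<And>d r. r \<in> G d \<Longrightarrow> a * r = r * a"
  shows "a * x = x * a"
proof -
  define c where "c = dec x"
  have hd: "hom_decomp G x c" using dec c_def by simp
  define K where "K = {d. c d \<noteq> 0}"
  have x: "x = sum c K" using hd unfolding hom_decomp_def K_def by simp
  have "a * x = (\<Sum>k\<in>K. a * c k)" by (simp add: x sum_distrib_left)
  also have "\<dots> = (\<Sum>k\<in>K. c k * a)" using h hd_mem[OF hd] by (intro sum.cong) auto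
  also have "\<dots> = x * a" by (simp add: x sum_distrib_right)
  finally show ?thesis .
qed

lemma eps_central: "eps * x = x * eps"
  using hom_central eps_comm_hom by blast


lemma ei: "eps * unit_inv eps = 1 \<and> unit_inv eps * eps = 1"
proof -
  obtain y where y: "eps * y = 1" "y * eps = 1" using eps_unit by blast
  have u: "eps * z = 1 \<and> z * eps = 1 \<Longrightarrow> z = y" for z
  proof -
    assume "eps * z = 1 \<and> z * eps = 1"
    then have "z = (y * eps) * z" using y by simp
    also have "\<dots> = y * (eps * z)" by (simp add: mult.assoc)
    finally show "z = y" using \<open>eps * z = 1 \<and> z * eps = 1\<close> by simp
  qed
  have "unit_inv eps = y" unfolding unit_inv_def
    by (rule the_equality) (use y u in blast)+
  then show ?thesis using y by simp
qed

lemma ei_central: "unit_inv eps * x = x * unit_inv eps"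
proof -
  let ?e = "unit_inv eps"
  have "?e * x = ?e * x * (eps * ?e)" using ei by simp
  also have "\<dots> = ?e * (x * eps) * ?e" by (simp add: mult.assoc)
  also have "\<dots> = ?e * (eps * x) * ?e" using eps_central[of x] by metis
  also have "\<dots> = (?e * eps) * x * ?e" by (simp add: mult.assoc)
  finally show ?thesis using ei by simp
qed

lemma pow_central: "(\<And>x. (a::'a) * x = x * a) \<Longrightarrow> a ^ n * x = x * a ^ n"
proof (induction n)
  case 0 then show ?case by simp
next
  case (Suc n)
  have "a ^ Suc n * x = a * (a ^ n * x)" by (simp add: mult.assoc)
  also have "\<dots> = a * (x * a ^ n)" using Suc by simp
  also have "\<dots> = x * a ^ Suc n" using Suc(2)[of x] by (simp add: mult.assoc[symmetric])
  finally show ?case .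
qed

lemma pow_inv: "(b::'a) * a = 1 \<Longrightarrow> b ^ n * a ^ n = 1"
proof (induction n)
  case 0 then show ?case by simp
next
  case (Suc n)
  have "b ^ Suc n * a ^ Suc n = (b * b ^ n) * (a ^ n * a)"
    by (metis power_Suc power_Suc2)
  also have "\<dots> = b * (b ^ n * a ^ n) * a" by (simp only: mult.assoc)
  finally have "b ^ Suc n * a ^ Suc n = b * (b ^ n * a ^ n) * a" .
  then show ?case using Suc by simp
qed

lemma ipow_central: "ipow eps k * x = x * ipow eps k"
  unfolding ipow_def using pow_central eps_central ei_central by auto

lemma ipow_inv: "\<exists>E'. E' * ipow eps k = 1"
  unfolding ipow_def using pow_inv ei by auto

lemma ore: "\<sigma> \<in> G e \<Longrightarrow> \<exists>z. y * \<sigma> = \<sigma> * z"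
proof -
  assume sg: "\<sigma> \<in> G e"
  define c where "c = dec y"
  have hd: "hom_decomp G y c" using dec c_def by simp
  define K where "K = {d. c d \<noteq> 0}"
  have y: "y = sum c K" using hd unfolding hom_decomp_def K_def by simp
  have "y * \<sigma> = (\<Sum>k\<in>K. c k * \<sigma>)" by (simp add: y sum_distrib_right)
  also have "\<dots> = (\<Sum>k\<in>K. \<sigma> * (ipow eps (k * e) * c k))"
  proof (intro sum.cong refl)
    fix k
    have "c k * \<sigma> = ipow eps (k * e) * (\<sigma> * c k)" using comm[OF hd_mem[OF hd] sg] .
    also have "\<dots> = \<sigma> * (ipow eps (k * e) * c k)"
      by (metis ipow_central mult.assoc)
    finally show "c k * \<sigma> = \<sigma> * (ipow eps (k * e) * c k)" .
  qed
  also have "\<dots> = \<sigma> * (\<Sum>k\<in>K. ipow eps (k * e) * c k)" by (simp add: sum_distrib_left)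
  finally show ?thesis by blast
qed

lemma rev0: "\<sigma> \<in> G e \<Longrightarrow> \<sigma> * y = 0 \<Longrightarrow> y * \<sigma> = 0"
proof -
  assume sg: "\<sigma> \<in> G e" and z: "\<sigma> * y = 0"
  define c where "c = dec y"
  have hd: "hom_decomp G y c" using dec c_def by simp
  define K where "K = {d. c d \<noteq> 0}"
  have y: "y = sum c K" using hd unfolding hom_decomp_def K_def by simp
  have "hom_decomp G 0 (\<lambda>j. \<sigma> * c (j - e))" using shiftL[OF hd sg] z by simp
  then have "(\<lambda>j. \<sigma> * c (j - e)) = (\<lambda>_. 0)" using dec_unique hd_zero by blast
  then have zk: "\<sigma> * c k = 0" for k by (metis add_diff_cancel)
  have "y * \<sigma> = (\<Sum>k\<in>K. c k * \<sigma>)" by (simp add: y sum_distrib_right)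
  also have "\<dots> = 0"
    by (rule sum.neutral) (simp add: comm[OF hd_mem[OF hd] sg] zk)
  finally show ?thesis .
qed

lemma MR: assumes h: "h \<in> G e" "h \<notin> p" and xh: "x * h \<in> p" shows "x \<in> p"
proof -
  define c where "c = dec x"
  have hd: "hom_decomp G x c" using dec c_def by simp
  define K where "K = {d. c d \<noteq> 0}"
  have x: "x = sum c K" using hd unfolding hom_decomp_def K_def by simp
  have "c (k + e - e) * h \<in> p" for k using p_comp[OF xh shiftR[OF hd h(1)]] .
  then have "c k * h \<in> p" for k by simp
  then have "c k \<in> p" for k using prime[OF hd_mem[OF hd] h(1)] h(2) by blast
  have "finite K" using hd_fin[OF hd] K_def by simp
  then have "sum c K \<in> p" using \<open>\<And>k. c k \<in> p\<close> by (intro p_sum)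
  then show ?thesis using x by simp
qed

lemma Lhom:
  assumes s: "s \<in> G e" "s \<notin> p" and sc: "s * y \<in> G m" "s * y \<notin> p"
  shows "\<exists>h q. y = h + q \<and> h \<in> G (m - e) \<and> h \<notin> p \<and> q \<in> p"
proof -
  define c where "c = dec y"
  have hd: "hom_decomp G y c" using dec c_def by simp
  define K where "K = {d. c d \<noteq> 0}"
  have fK: "finite K" using hd_fin[OF hd] K_def by simp
  have fe: "(\<lambda>j. s * c (j - e)) = (\<lambda>j. if j = m then s * y else 0)"
    using dec_unique[OF shiftL[OF hd s(1)] hd_single[OF sc(1)]] .
  have eq: "s * c k = (if k + e = m then s * y else 0)" for k
    using fun_cong[OF fe, of "k + e"] by simp
  have ck: "c k \<in> p" if "k \<noteq> m - e" for k
  proof -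
    have "k + e \<noteq> m" using that by arith
    then have "s * c k = 0" using eq[of k] by simp
    then have "s * c k \<in> p" using p_zero by simp
    then show ?thesis using prime[OF s(1) hd_mem[OF hd]] s(2) by blast
  qed
  have sh: "s * c (m - e) = s * y" using eq[of "m - e"] by simp
  have hn: "c (m - e) \<notin> p"
  proof
    assume "c (m - e) \<in> p"
    then have "s * c (m - e) \<in> p" by (rule p_multL)
    then show False using sh sc(2) by simp
  qed
  have "y = sum c (insert (m - e) K)"
    by (rule dec_sum[OF hd]) (use fK K_def in auto)
  also have "\<dots> = c (m - e) + sum c (K - {m - e})"
    using fK by (rule sum.insert_remove)
  finally have "y = c (m - e) + sum c (K - {m - e})" .
  moreover have "sum c (K - {m - e}) \<in> p" using fK ck by (intro p_sum) auto
  ultimately show ?thesis using hn hd_mem[OF hd] by blast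
qed

lemma N: assumes s: "s \<in> S" and sc: "s * y \<in> S" and xc: "x * y \<in> p" shows "x \<in> p"
proof -
  obtain e where e: "s \<in> G e" using s S_iff by blast
  obtain m where m: "s * y \<in> G m" using sc S_iff by blast
  have "s \<notin> p" "s * y \<notin> p" using s sc S_iff by auto
  then obtain h q where hq: "y = h + q" "h \<in> G (m - e)" "h \<notin> p" "q \<in> p"
    using Lhom[OF e _ m] by blast
  have "x * h = x * y - x * q" using hq(1) by (simp add: distrib_left)
  then have "x * h \<in> p" using xc p_multL[OF hq(4)] p_diff by simp
  then show ?thesis using MR hq by blast
qed

abbreviation "fr \<equiv> frac_rel G p"

lemma fr_iff: "((a, s), (b, t)) \<in> fr \<longleftrightarrow> s \<in> S \<and> t \<in> S \<and> (\<exists>c d. s * c = t * d \<and> s * c \<in> S \<and> a * c = b * d)"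
  by (simp add: frac_rel_def)

lemma fr_refl: "s \<in> S \<Longrightarrow> ((a, s), (a, s)) \<in> fr"
  unfolding fr_iff by (rule conjI, simp, rule conjI, simp, rule exI[of _ 1], rule exI[of _ 1]) simp

lemma fr_sym: "((a, s), (b, t)) \<in> fr \<Longrightarrow> ((b, t), (a, s)) \<in> fr"
  unfolding fr_iff by (metis)

lemma fr_trans: assumes 1: "((a, s), (b, t)) \<in> fr" and 2: "((b, t), (x, w)) \<in> fr"
  shows "((a, s), (x, w)) \<in> fr"
proof -
  obtain c d where cd: "s * c = t * d" "s * c \<in> S" "a * c = b * d" and sS: "s \<in> S" and tS: "t \<in> S"
    using 1 fr_iff by blast
  obtain c' d' where cd': "t * c' = w * d'" "t * c' \<in> S" "b * c' = x * d'" and wS: "w \<in> S"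
    using 2 fr_iff by blast
  obtain e1 where e1: "t * c' \<in> G e1" using cd'(2) S_iff by blast
  obtain z where z: "(t * d) * (t * c') = (t * c') * z" using ore[OF e1] by blast
  obtain e2 where e2: "t \<in> G e2" using tS S_iff by blast
  have "t * (d * (t * c') - c' * z) = 0" using z by (simp add: algebra_simps mult.assoc)
  then have "(d * (t * c') - c' * z) * t = 0" using rev0[OF e2] by blast
  then have dz: "d * (t * c') * t = c' * z * t" by (simp add: algebra_simps)
  let ?C = "c * (t * c') * t" and ?D = "d' * z * t"
  have "s * ?C = (s * c) * (t * c') * t" by (simp only: mult.assoc)
  also have "\<dots> = t * d * (t * c') * t" using cd(1) by simp
  also have "\<dots> = t * c' * z * t" using dz by (simp add: mult.assoc)
  also have "\<dots> = w * ?D" using cd'(1) by (simp add: mult.assoc)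
  finally have eq1: "s * ?C = w * ?D" .
  have inS: "s * ?C \<in> S"
  proof -
    have "s * ?C = (s * c) * (t * c') * t" by (simp add: mult.assoc)
    then show ?thesis using S_mult cd(2) cd'(2) tS by metis
  qed
  have "a * ?C = b * (d * (t * c') * t)" using cd(3) by (simp add: mult.assoc[symmetric])
  also have "\<dots> = b * c' * z * t" using dz by (simp add: mult.assoc)
  also have "\<dots> = x * ?D" using cd'(3) by (simp add: mult.assoc)
  finally show ?thesis unfolding fr_iff using sS wS eq1 inS by blast
qed

lemma mem_frac: "y \<in> frac G p a s \<longleftrightarrow> ((a, s), y) \<in> fr"
  by (simp add: frac_def)

lemma frac_eq: assumes "((a, s), (b, t)) \<in> fr" shows "frac G p a s = frac G p b t"
proof -
  have "((b,t), (x,w)) \<in> fr" if "((a,s), (x,w)) \<in> fr" for x w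
    using fr_trans[OF fr_sym[OF assms] that] .
  moreover have "((a,s), (x,w)) \<in> fr" if "((b,t), (x,w)) \<in> fr" for x w
    using fr_trans[OF assms that] .
  ultimately show ?thesis unfolding frac_def by (auto simp: Image_singleton)
qed

lemma carrier_loc: "X \<in> carrier (loc G p) \<longleftrightarrow> (\<exists>a s. s \<in> S \<and> X = frac G p a s)"
proof -
  have "carrier (loc G p) = (UNIV \<times> S) // fr" by (simp add: loc_def)
  then show ?thesis unfolding quotient_def frac_def by blast
qed

lemma loc_one: "one (loc G p) = frac G p 1 1" by (simp add: loc_def)

lemma loc_mult: "mult (loc G p) X Y = (SOME Z. \<exists>a s b t c u. (a, s) \<in> X \<and> (b, t) \<in> Y \<and> u \<in> S \<and>
                 b * u = s * c \<and> Z = frac G p (a * c) (t * u))"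
  by (simp add: loc_def)

lemma S_G: "s \<in> S \<Longrightarrow> \<exists>e. s \<in> G e" using S_iff by blast

lemma unit_prod:
  assumes A: "A \<in> S" and B: "B \<in> S"
  shows "mult (loc G p) (frac G p A B) (frac G p B A) = frac G p 1 1"
proof -
  define P where "P = (\<lambda>Z. \<exists>a s b t c u. (a, s) \<in> frac G p A B \<and> (b, t) \<in> frac G p B A \<and> u \<in> S \<and>
                 b * u = s * c \<and> Z = frac G p (a * c) (t * u))"
  have "P (frac G p (A * B) (A * B))" unfolding P_def
    apply (rule exI[of _ A], rule exI[of _ B], rule exI[of _ B], rule exI[of _ A], rule exI[of _ B], rule exI[of _ B])
    using fr_refl A B by (simp add: mem_frac)
  then have "P (SOME Z. P Z)" by (rule someI)
  then obtain a' s' b' t c u where w: "(a', s') \<in> frac G p A B" "(b', t) \<in> frac G p B A" "u \<in> S"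
     "b' * u = s' * c" and Z: "(SOME Z. P Z) = frac G p (a' * c) (t * u)"
    unfolding P_def by blast
  have M: "mult (loc G p) (frac G p A B) (frac G p B A) = (SOME Z. P Z)"
    unfolding loc_mult P_def by simp
  obtain c1 d1 where 1: "B * c1 = s' * d1" "B * c1 \<in> S" "A * c1 = a' * d1" and s'S: "s' \<in> S"
    using w(1) unfolding mem_frac fr_iff by blast
  obtain c2 d2 where 2: "A * c2 = t * d2" "A * c2 \<in> S" "B * c2 = b' * d2" and tS: "t \<in> S"
    using w(2) unfolding mem_frac fr_iff by blast
  obtain eu where eu: "u \<in> G eu" using S_G w(3) by blast
  obtain z where z: "d2 * u = u * z" using ore[OF eu] by blast
  obtain ew where ew: "B * c1 \<in> G ew" using S_G 1(2) by blast
  obtain z' where z': "(B * c2 * u) * (B * c1) = (B * c1) * z'" using ore[OF ew] by blast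
  obtain es where es: "s' \<in> G es" using S_G s'S by blast
  obtain eB where eB: "B \<in> G eB" using S_G B by blast
  define w' where "w' = B * c1"
  have st: "B * c2 * u = s' * c * z"
  proof -
    have "B * c2 * u = b' * (d2 * u)" using 2(3) by (simp add: mult.assoc[symmetric])
    also have "\<dots> = (b' * u) * z" using z by (simp add: mult.assoc)
    also have "\<dots> = s' * c * z" using w(4) by simp
    finally show ?thesis .
  qed
  have "s' * (c * z * w' - d1 * z') = 0"
  proof -
    have "s' * (c * z * w') = (B * c2 * u) * w'" using st by (simp add: mult.assoc)
    also have "\<dots> = (B * c1) * z'" using z' w'_def by simp
    also have "\<dots> = s' * (d1 * z')" using 1(1) by (simp add: mult.assoc)
    finally show ?thesis by (simp add: right_diff_distrib)
  qed
  then have "(c * z * w' - d1 * z') * s' = 0" by (rule rev0[OF es])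
  then have r1: "c * z * w' * s' = d1 * z' * s'" by (simp add: left_diff_distrib)
  have "B * (c2 * u * w' - c1 * z') = 0"
  proof -
    have "B * (c2 * u * w') = (B * c2 * u) * w'" by (simp add: mult.assoc)
    also have "\<dots> = B * (c1 * z')" using z' w'_def by (simp add: mult.assoc)
    finally show ?thesis by (simp add: right_diff_distrib)
  qed
  then have "(c2 * u * w' - c1 * z') * B = 0" by (rule rev0[OF eB])
  then have r2: "c2 * u * w' * B = c1 * z' * B" by (simp add: left_diff_distrib)
  define E where "E = ipow eps (es * eB)"
  have sB: "s' * B = E * (B * s')" using comm[OF es eB] E_def by simp
  have Ec: "E * x = x * E" for x using ipow_central E_def by simp
  define c3 where "c3 = z * w' * B * s'"
  have "E * (a' * c * c3) = a' * c * z * w' * (E * (B * s'))"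
    unfolding c3_def by (metis Ec mult.assoc)
  also have "\<dots> = a' * (c * z * w' * s') * B" using sB by (simp add: mult.assoc)
  also have "\<dots> = (a' * d1) * z' * s' * B" using r1 by (simp add: mult.assoc)
  also have "\<dots> = A * c1 * z' * (s' * B)" using 1(3) by (simp add: mult.assoc)
  also have "\<dots> = E * (A * (c1 * z' * B) * s')" using sB by (metis Ec mult.assoc)
  also have "\<dots> = E * (A * (c2 * u * w' * B) * s')" using r2 by simp
  also have "\<dots> = E * ((A * c2) * u * w' * B * s')" by (simp add: mult.assoc)
  also have "\<dots> = E * (t * (d2 * u) * w' * B * s')" using 2(1) by (simp add: mult.assoc)
  also have "\<dots> = E * (t * u * c3)" unfolding c3_def using z by (simp add: mult.assoc)
  finally have "E * (a' * c * c3) = E * (t * u * c3)" .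
  moreover obtain E' where "E' * E = 1" using ipow_inv E_def by blast
  ultimately have eq: "a' * c * c3 = t * u * c3" by (metis mult.assoc mult_1_left)
  have "t * u * c3 = (A * c2) * u * w' * B * s'"
    unfolding c3_def using z 2(1) by (simp add: mult.assoc)
  moreover have "(A * c2) * u * w' * B * s' \<in> S"
    using S_mult 2(2) w(3) 1(2) B s'S w'_def by metis
  ultimately have inS: "t * u * c3 \<in> S" by simp
  have tu: "t * u \<in> S" using S_mult tS w(3) by blast
  have "((a' * c, t * u), (1, 1)) \<in> fr" unfolding fr_iff
    using tu S_one inS eq by (metis mult_1_left)
  then show ?thesis using M Z frac_eq by simp
qed

lemma unit_num:
  assumes U: "X \<in> Units (loc G p)" and as: "(a, s) \<in> X"
  shows "a \<notin> p"
proof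
  assume ap: "a \<in> p"
  have Xc: "X \<in> carrier (loc G p)" using U by (simp add: Units_def)
  obtain Y where Yc: "Y \<in> carrier (loc G p)" and XY: "mult (loc G p) X Y = one (loc G p)"
    using U unfolding Units_def by blast
  obtain x0 s0 where s0: "s0 \<in> S" and X: "X = frac G p x0 s0" using Xc carrier_loc by blast
  obtain y0 t0 where t0: "t0 \<in> S" and Y: "Y = frac G p y0 t0" using Yc carrier_loc by blast
  define P where "P = (\<lambda>Z. \<exists>a s b t c u. (a, s) \<in> X \<and> (b, t) \<in> Y \<and> u \<in> S \<and>
                 b * u = s * c \<and> Z = frac G p (a * c) (t * u))"
  obtain e0 where e0: "s0 \<in> G e0" using S_G s0 by blast
  obtain z where z: "y0 * s0 = s0 * z" using ore[OF e0] by blast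
  have "P (frac G p (x0 * z) (t0 * s0))" unfolding P_def
    apply (rule exI[of _ x0], rule exI[of _ s0], rule exI[of _ y0], rule exI[of _ t0], rule exI[of _ z], rule exI[of _ s0])
    using fr_refl s0 t0 z X Y by (simp add: mem_frac)
  then have "P (SOME Z. P Z)" by (rule someI)
  then obtain a' s' b t c u where w: "(a', s') \<in> X" and Z: "(SOME Z. P Z) = frac G p (a' * c) (t * u)"
    unfolding P_def by blast
  have "mult (loc G p) X Y = (SOME Z. P Z)" unfolding loc_mult P_def by simp
  then have "frac G p (a' * c) (t * u) = frac G p 1 1" using XY Z loc_one by simp
  moreover have "(1, 1) \<in> frac G p 1 1" using fr_refl[OF S_one] mem_frac by blast
  ultimately have "((a' * c, t * u), (1, 1)) \<in> fr" using mem_frac by metis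
  then obtain c3 d3 where "a' * c * c3 = 1 * d3" "t * u * c3 = 1 * d3" "t * u * c3 \<in> S"
    unfolding fr_iff by blast
  then have nS: "a' * (c * c3) \<in> S" by (simp add: mult.assoc)
  obtain c1 d1 where 1: "s0 * c1 = s' * d1" "s0 * c1 \<in> S" "x0 * c1 = a' * d1" and s'S: "s' \<in> S"
  proof -
    have "((x0, s0), (a', s')) \<in> fr" using w X mem_frac by simp
    then show ?thesis using that unfolding fr_iff by blast
  qed
  obtain c2 d2 where 2: "s0 * c2 = s * d2" "s0 * c2 \<in> S" "x0 * c2 = a * d2" and sS: "s \<in> S"
  proof -
    have "((x0, s0), (a, s)) \<in> fr" using as X mem_frac by simp
    then show ?thesis using that unfolding fr_iff by blast
  qed
  have "x0 * c2 \<in> p" using 2(3) p_multR[OF ap] by simp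
  then have "x0 \<in> p" using N[OF s0 2(2)] by blast
  then have "a' * d1 \<in> p" using 1(3) p_multR by metis
  then have "a' \<in> p" using N[OF s'S] 1(1,2) by metis
  then have "a' * (c * c3) \<in> p" by (rule p_multR)
  then show False using nS S_iff by blast
qed

lemma rep_S: "X \<in> carrier (loc G p) \<Longrightarrow> (a, s) \<in> X \<Longrightarrow> s \<in> S"
  using carrier_loc mem_frac fr_iff by metis

definition "D = {d. d \<noteq> 0 \<and> (\<exists>f \<in> G d. f \<notin> p)}"

lemma dvd_deg: "f \<in> G d \<Longrightarrow> f \<notin> p \<Longrightarrow> Gcd D dvd d"
  by (cases "d = 0") (auto simp: D_def intro: Gcd_dvd)

lemma unit_deg: "X \<in> Units (loc G p) \<Longrightarrow> X \<in> loc_grading G p k \<Longrightarrow> Gcd D dvd k"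
proof -
  assume U: "X \<in> Units (loc G p)" and k: "X \<in> loc_grading G p k"
  obtain a s d e where ase: "(a, s) \<in> X" "a \<in> G d" "s \<in> G e" "k = d - e"
    using k unfolding loc_grading_def by blast
  have "a \<notin> p" using unit_num[OF U ase(1)] .
  then have "Gcd D dvd d" using dvd_deg ase(2) by blast
  moreover have "s \<in> S" using rep_S U ase(1) unfolding Units_def by blast
  then have "Gcd D dvd e" using dvd_deg ase(3) S_iff by blast
  ultimately show ?thesis using ase(4) by simp
qed

lemma unit_exists:
  assumes "A \<in> G dA" "A \<notin> p" "B \<in> G dB" "B \<notin> p"
  shows "frac G p A B \<in> Units (loc G p) \<inter> loc_grading G p (dA - dB)"
proof -
  have A: "A \<in> S" and B: "B \<in> S" using assms S_iff by auto
  have c1: "frac G p A B \<in> carrier (loc G p)" using carrier_loc B by blast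
  have c2: "frac G p B A \<in> carrier (loc G p)" using carrier_loc A by blast
  have "frac G p A B \<in> Units (loc G p)"
    unfolding Units_def using c1 c2 unit_prod[OF A B] unit_prod[OF B A] loc_one by auto
  moreover have "(A, B) \<in> frac G p A B" using fr_refl[OF B] mem_frac by blast
  then have "frac G p A B \<in> loc_grading G p (dA - dB)"
    unfolding loc_grading_def using c1 assms by blast
  ultimately show ?thesis by blast
qed

definition "T = {k. \<exists>A B dA dB. A \<in> G dA \<and> A \<notin> p \<and> B \<in> G dB \<and> B \<notin> p \<and> k = dA - dB}"

lemma T_add: "k1 \<in> T \<Longrightarrow> k2 \<in> T \<Longrightarrow> k1 + k2 \<in> T"
proof -
  assume "k1 \<in> T" "k2 \<in> T"
  then obtain A1 B1 a1 b1 A2 B2 a2 b2 where h: "A1 \<in> G a1" "A1 \<notin> p" "B1 \<in> G b1" "B1 \<notin> p" "k1 = a1 - b1"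
    "A2 \<in> G a2" "A2 \<notin> p" "B2 \<in> G b2" "B2 \<notin> p" "k2 = a2 - b2" unfolding T_def by blast
  have "A1 * A2 \<in> G (a1 + a2)" "B1 * B2 \<in> G (b1 + b2)" using h G_mult by auto
  moreover have "A1 * A2 \<notin> p" "B1 * B2 \<notin> p" using h prime by blast+
  moreover have "k1 + k2 = (a1 + a2) - (b1 + b2)" using h by simp
  ultimately show ?thesis unfolding T_def by blast
qed

lemma T_neg: "k \<in> T \<Longrightarrow> - k \<in> T"
  unfolding T_def by (auto, metis minus_diff_eq)

lemma T_0: "0 \<in> T"
  unfolding T_def using G_one one_notin by force

lemma T_mult_nat: "k \<in> T \<Longrightarrow> int n * k \<in> T"
  by (induction n) (auto simp: T_0 distrib_right T_add)

lemma T_mult: "k \<in> T \<Longrightarrow> n * k \<in> T"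
proof (cases "n \<ge> 0")
  case True
  assume "k \<in> T"
  then show ?thesis using T_mult_nat[of k "nat n"] True by simp
next
  case False
  assume "k \<in> T"
  then have "int (nat (- n)) * k \<in> T" by (rule T_mult_nat)
  then have "- (n * k) \<in> T" using False by simp
  then show ?thesis using T_neg by fastforce
qed

lemma D_T: "D \<subseteq> T"
proof
  fix d assume "d \<in> D"
  then obtain f where "f \<in> G d" "f \<notin> p" unfolding D_def by blast
  then show "d \<in> T" unfolding T_def using G_one one_notin by force
qed

lemma T_dvd: "k \<in> T \<Longrightarrow> Gcd D dvd k"
  unfolding T_def using dvd_deg by (auto intro: dvd_diff)

lemma gcd_in_T: assumes g: "Gcd D > 0" shows "Gcd D \<in> T"
proof -
  have "D \<noteq> {}" using g by auto
  then obtain d where d: "d \<in> D" by blast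
  then have d0: "d \<noteq> 0" "d \<in> T" using D_def D_T by auto
  have "nat \<bar>d\<bar> > 0 \<and> int (nat \<bar>d\<bar>) \<in> T"
    using d0 T_neg by (cases "d \<ge> 0") auto
  then have ex: "\<exists>n. n > 0 \<and> int n \<in> T" by blast
  define m where "m = (LEAST n. n > 0 \<and> int n \<in> T)"
  have m: "m > 0" "int m \<in> T" using LeastI_ex[OF ex] m_def by auto
  have mdvd: "int m dvd x" if x: "x \<in> T" for x
  proof -
    have "x mod int m = x + (- (x div int m)) * int m"
      by (simp add: minus_div_mult_eq_mod[symmetric])
    then have inT: "x mod int m \<in> T" using T_add T_mult[OF m(2)] x by metis
    have b: "0 \<le> x mod int m" "x mod int m < int m" using m(1) by auto
    show ?thesis
    proof (rule ccontr)
      assume "\<not> int m dvd x"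
      then have "x mod int m > 0" using b(1) by (simp add: dvd_eq_mod_eq_0 order_le_less)
      then have "nat (x mod int m) > 0 \<and> int (nat (x mod int m)) \<in> T" using inT by simp
      then have "m \<le> nat (x mod int m)" unfolding m_def by (rule Least_le)
      then show False using b by linarith
    qed
  qed
  have "int m dvd Gcd D" using mdvd D_T by (intro Gcd_greatest) auto
  moreover have "Gcd D dvd int m" using T_dvd m(2) .
  ultimately have "Gcd D = int m" using g by (simp add: zdvd_antisym_nonneg)
  then show ?thesis using m by simp
qed

lemma main: "period (loc G p) (loc_grading G p) = Gcd D"
proof (cases "\<exists>d>0. loc_grading G p d \<inter> Units (loc G p) \<noteq> {}")
  case True
  then obtain d X where d: "d > 0" "X \<in> loc_grading G p d" "X \<in> Units (loc G p)" by blast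
  then have "Gcd D dvd d" using unit_deg by blast
  then have g: "Gcd D > 0" using d(1) Gcd_int_greater_eq_0[of D] by (metis dvd_0_left less_le)
  then obtain A B dA dB where ab: "A \<in> G dA" "A \<notin> p" "B \<in> G dB" "B \<notin> p" "Gcd D = dA - dB"
    using gcd_in_T unfolding T_def by blast
  have "(LEAST d. d > 0 \<and> loc_grading G p d \<inter> Units (loc G p) \<noteq> {}) = Gcd D"
  proof (rule Least_equality)
    show "Gcd D > 0 \<and> loc_grading G p (Gcd D) \<inter> Units (loc G p) \<noteq> {}"
      using g unit_exists[OF ab(1-4)] ab(5) by auto
    fix y assume "y > 0 \<and> loc_grading G p y \<inter> Units (loc G p) \<noteq> {}"
    then show "Gcd D \<le> y" using unit_deg zdvd_imp_le by blast
  qed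
  then show ?thesis using True by (simp add: period_def)
next
  case False
  have "Gcd D = 0"
  proof (rule ccontr)
    assume "Gcd D \<noteq> 0"
    then have g: "Gcd D > 0" using Gcd_int_greater_eq_0[of D] by linarith
    then obtain A B dA dB where ab: "A \<in> G dA" "A \<notin> p" "B \<in> G dB" "B \<notin> p" "Gcd D = dA - dB"
      using gcd_in_T unfolding T_def by blast
    then have "loc_grading G p (Gcd D) \<inter> Units (loc G p) \<noteq> {}" using unit_exists[OF ab(1-4)] by auto
    then show False using False g by blast
  qed
  moreover have "period (loc G p) (loc_grading G p) = 0" using False unfolding period_def by auto
  ultimately show ?thesis by simp
qed

end

theorem proposition2p14:
  fixes G :: "int \<Rightarrow> 'a::ring_1 set" and \<epsilon> :: 'a and p :: "'a set"
  assumes "graded_ring G \<epsilon>"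
    and "hom_prime G p"
  shows "period (loc G p) (loc_grading G p) =
           Gcd {d. d \<noteq> 0 \<and> (\<exists>f \<in> G d. f \<notin> p)}"
proof -
  interpret grl G \<epsilon> p using assms by unfold_locales
  show ?thesis using main by (simp add: D_def)
qed

end
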